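(* In the standard LLP setup, for all $s\in\Sigma^*$ and all $N,M\ge1$: $\overline{f^M_{cons}(s)}|_1\subseteq\overline{f^N_{optm}(s)}|_1$.
   Context: Standard LLP setup. $\Sigma=\Sigma_c\,\dot\cup\,\Sigma_{uc}$ is a finite alphabet partitioned into controllable and uncontrollable events. The plant $G$ has generated language $L(G)$ and marked language $L_m(G)$ with $L(G)=\overline{L_m(G)}$ ($\overline{M}$ = set of prefixes of strings in $M$). The legal language $K\subseteq L_m(G)$ satisfies $K=\overline{K}\cap L_m(G)$. For a prefix-closed $L$, $M$ is controllable w.r.t. $L$ if $\overline{M}\Sigma_{uc}\cap L\subseteq\overline{M}$. For a language $L$ and $s\in\Sigma^*$: $L/s=\{t: st\in L\}$; $L|_N=\{t\in L:|t|\le N\}$. $M^{\uparrow/s|_N}$ is the supremal sublanguage of $M$ controllable w.r.t. $L(G)/s|_N$. Conservative attitude: $f^N_{cons}(s)=[K/s|_{N-1}]^{\uparrow/s|_N}$; optimistic attitude: $f^N_{optm}(s)=[K/s|_N\cup(\overline{K}/s|_N\setminus\overline{K}/s|_{N-1})]^{\uparrow/s|_N}$. *)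

theory Defs
  imports Main
begin

definition pref :: "'a list set \<Rightarrow> 'a list set" where
  "pref M = {t. \<exists>u. t @ u \<in> M}"

definition quot :: "'a list set \<Rightarrow> 'a list \<Rightarrow> 'a list set" where
  "quot L s = {t. s @ t \<in> L}"

definition trunc :: "'a list set \<Rightarrow> nat \<Rightarrow> 'a list set" where
  "trunc L N = {t \<in> L. length t \<le> N}"

definition controllable :: "'a set \<Rightarrow> 'a list set \<Rightarrow> 'a list set \<Rightarrow> bool" where
  "controllable Sig_uc L M \<longleftrightarrow>
     (\<forall>t \<sigma>. t \<in> pref M \<and> \<sigma> \<in> Sig_uc \<and> t @ [\<sigma>] \<in> L \<longrightarrow> t @ [\<sigma>] \<in> pref M)"

definition supC :: "'a set \<Rightarrow> 'a list set \<Rightarrow> 'a list set \<Rightarrow> 'a list set" where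
  "supC Sig_uc L M = \<Union>{M'. M' \<subseteq> M \<and> controllable Sig_uc L M'}"

definition sup_ctrl :: "'a set \<Rightarrow> 'a list set \<Rightarrow> 'a list \<Rightarrow> nat \<Rightarrow> 'a list set \<Rightarrow> 'a list set" where
  "sup_ctrl Sig_uc LG s N M = supC Sig_uc (trunc (quot LG s) N) M"

definition f_cons :: "'a set \<Rightarrow> 'a list set \<Rightarrow> 'a list set \<Rightarrow> nat \<Rightarrow> 'a list \<Rightarrow> 'a list set" where
  "f_cons Sig_uc LG K N s = sup_ctrl Sig_uc LG s N (trunc (quot K s) (N - 1))"

definition f_optm :: "'a set \<Rightarrow> 'a list set \<Rightarrow> 'a list set \<Rightarrow> nat \<Rightarrow> 'a list \<Rightarrow> 'a list set" where
  "f_optm Sig_uc LG K N s = sup_ctrl Sig_uc LG s N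
     (trunc (quot K s) N \<union>
      (trunc (quot (pref K) s) N - trunc (quot (pref K) s) (N - 1)))"

end

theory Submission
  imports Defs
begin

lemma prefI: "w @ v \<in> X \<Longrightarrow> w \<in> pref X"
  unfolding pref_def by (rule CollectI, rule exI)

lemma prefE: "w \<in> pref X \<Longrightarrow> (\<And>v. w @ v \<in> X \<Longrightarrow> P) \<Longrightarrow> P"
  unfolding pref_def by (erule CollectE, erule exE)

lemma truncI: "x \<in> L \<Longrightarrow> length x \<le> N \<Longrightarrow> x \<in> trunc L N"
  unfolding trunc_def by simp

lemma truncD: "x \<in> trunc L N \<Longrightarrow> x \<in> L \<and> length x \<le> N"
  unfolding trunc_def by simp

lemma pref_M2:
  assumes "w \<in> pref A" "length w \<le> N"
  shows "w \<in> pref ({x \<in> A. length x \<le> N} \<union> {x \<in> pref A. length x = N})"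
proof -
  obtain u where u: "w @ u \<in> A" using assms(1) by (rule prefE)
  show ?thesis
  proof (cases "length (w @ u) \<le> N")
    case True
    then show ?thesis using u by (intro prefI[of w u]) simp
  next
    case False
    define v where "v = take (N - length w) u"
    have "w @ v @ drop (N - length w) u \<in> A" using u by (simp add: v_def)
    hence "w @ v \<in> pref A" using prefI[of "w @ v" "drop (N - length w) u" A] by simp
    moreover have "length (w @ v) = N" using False assms(2) by (simp add: v_def)
    ultimately show ?thesis by (intro prefI[of w v]) simp
  qed
qed

lemma pref_M2_sub:
  assumes "t \<in> pref ({x \<in> A. length x \<le> N} \<union> {x \<in> pref A. length x = N})"
  shows "t \<in> pref A"
proof -
  obtain u where "t @ u \<in> {x \<in> A. length x \<le> N} \<union> {x \<in> pref A. length x = N}"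
    using assms by (rule prefE)
  then consider "t @ u \<in> A" | "t @ u \<in> pref A" by blast
  then show ?thesis
  proof cases
    case 1 then show ?thesis by (rule prefI)
  next
    case 2
    then obtain v where "(t @ u) @ v \<in> A" by (rule prefE)
    then show ?thesis by (intro prefI[of t "u @ v"]) simp
  qed
qed

theorem theorem7:
  fixes Sig_c Sig_uc :: "'a set" and LG LmG K :: "'a list set"
    and s :: "'a list" and N M :: nat
  assumes "finite (Sig_c \<union> Sig_uc)" and "Sig_c \<inter> Sig_uc = {}"
    and "LmG \<subseteq> lists (Sig_c \<union> Sig_uc)"
    and "LG = pref LmG"
    and "K \<subseteq> LmG" and "K = pref K \<inter> LmG"
    and "s \<in> lists (Sig_c \<union> Sig_uc)"
    and "N \<ge> 1" and "M \<ge> 1"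
  shows "trunc (pref (f_cons Sig_uc LG K M s)) 1 \<subseteq> trunc (pref (f_optm Sig_uc LG K N s)) 1"
proof
  fix t assume t: "t \<in> trunc (pref (f_cons Sig_uc LG K M s)) 1"
  hence lt: "length t \<le> 1" and tp: "t \<in> pref (f_cons Sig_uc LG K M s)"
    by (auto dest: truncD)
  obtain u where "t @ u \<in> f_cons Sig_uc LG K M s" using tp by (rule prefE)
  then obtain A where tu: "t @ u \<in> A"
    and As: "A \<subseteq> trunc (quot K s) (M - 1)"
    and Ac: "controllable Sig_uc (trunc (quot LG s) M) A"
    unfolding f_cons_def sup_ctrl_def supC_def by blast
  define B where "B = {x \<in> A. length x \<le> N} \<union> {x \<in> pref A. length x = N}"
  have tA: "t \<in> pref A" using tu by (rule prefI)
  have ltN: "length t \<le> N" using lt assms(8) by simp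
  have tB: "t \<in> pref B" unfolding B_def by (rule pref_M2[OF tA ltN])
  have lenA: "length w \<le> M - 1" if wp: "w \<in> pref A" for w
  proof -
    obtain v where "w @ v \<in> A" using prefE[OF wp] by blast
    hence "w @ v \<in> trunc (quot K s) (M - 1)" using As by blast
    hence "length (w @ v) \<le> M - 1" by (rule truncD[THEN conjunct2])
    thus "length w \<le> M - 1" by simp
  qed
  have Bs: "B \<subseteq> trunc (quot K s) N \<union>
      (trunc (quot (pref K) s) N - trunc (quot (pref K) s) (N - 1))"
  proof
    fix x assume "x \<in> B"
    then consider "x \<in> A" "length x \<le> N" | "x \<in> pref A" "length x = N"
      unfolding B_def by blast
    then show "x \<in> trunc (quot K s) N \<union>
      (trunc (quot (pref K) s) N - trunc (quot (pref K) s) (N - 1))"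
    proof cases
      case 1
      hence "x \<in> quot K s" using As by (auto dest: truncD)
      then show ?thesis using 1 by (auto intro: truncI)
    next
      case 2
      then obtain v where "x @ v \<in> A" by (auto elim: prefE)
      hence "x @ v \<in> quot K s" using As by (auto dest: truncD)
      hence "(s @ x) @ v \<in> K" unfolding quot_def by simp
      hence "s @ x \<in> pref K" by (rule prefI)
      hence xq: "x \<in> quot (pref K) s" unfolding quot_def by simp
      have "x \<in> trunc (quot (pref K) s) N" using xq 2 by (auto intro: truncI)
      moreover have "x \<notin> trunc (quot (pref K) s) (N - 1)" using 2 assms(8)
        by (auto dest: truncD)
      ultimately show ?thesis by blast
    qed
  qed
  have Bc: "controllable Sig_uc (trunc (quot LG s) N) B"
    unfolding controllable_def
  proof (intro allI impI)
    fix w \<sigma> assume h: "w \<in> pref B \<and> \<sigma> \<in> Sig_uc \<and> w @ [\<sigma>] \<in> trunc (quot LG s) N"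
    have wA: "w \<in> pref A" using h unfolding B_def by (auto intro: pref_M2_sub)
    have "length w \<le> M - 1" using lenA[OF wA] .
    moreover have "w @ [\<sigma>] \<in> quot LG s" and lN: "length (w @ [\<sigma>]) \<le> N"
      using h by (auto dest: truncD)
    ultimately have "w @ [\<sigma>] \<in> trunc (quot LG s) M" using assms(9)
      by (intro truncI) auto
    hence "w @ [\<sigma>] \<in> pref A" using Ac h wA unfolding controllable_def by blast
    then show "w @ [\<sigma>] \<in> pref B" unfolding B_def using lN by (rule pref_M2)
  qed
  have "B \<subseteq> f_optm Sig_uc LG K N s"
    unfolding f_optm_def sup_ctrl_def supC_def using Bs Bc by blast
  moreover obtain v where "t @ v \<in> B" using prefE[OF tB] by blast
  ultimately have "t @ v \<in> f_optm Sig_uc LG K N s" by blast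
  hence "t \<in> pref (f_optm Sig_uc LG K N s)" by (rule prefI)
  then show "t \<in> trunc (pref (f_optm Sig_uc LG K N s)) 1" using lt by (rule truncI)
qed

end
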